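(* Let $M$ be a monoid, $e\in M$ an idempotent, and $\mathfrak m\subseteq M$ a two-sided ideal with $\mathfrak m=\mathfrak m^2$. Then $\mathsf p_{Me}\pitchfork\mathbf{Sh}(\mathcal F_{\mathfrak m})$ if and only if $e\in\mathfrak m$.
   Context: $Me$ is a filtered left $M$-set; $\mathsf p_{Me}$ is the corresponding point of the topos of right $M$-sets, with direct image $\mathsf p_*(S)=\mathrm{Hom}_{\mathrm{Sets}}(Me,S)$, right action $(\alpha m)(a)=\alpha(ma)$. $\mathfrak m^2=\{xy\mid x,y\in\mathfrak m\}$. $\mathcal F_{\mathfrak m}$ is the Grothendieck topology consisting of all right ideals of $M$ containing $\mathfrak m$. A right $M$-set $X$ is an $\mathcal F_{\mathfrak m}$-sheaf if for every $\mathfrak a\in\mathcal F_{\mathfrak m}$ the map $X\to\mathrm{Hom}_M(\mathfrak a,X)$, $x\mapsto(y\mapsto xy)$, is a bijection; $\mathbf{Sh}(\mathcal F_{\mathfrak m})$ is the full subcategory of such sheaves. For a point $\mathsf p$, $\mathsf p\pitchfork\mathscr T$ means $\mathsf p_*(S)\in\mathscr T$ for every set $S$. *)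

theory Defs
  imports Main "HOL-Library.FuncSet"
begin

text \<open>The monoid M is the type 'a of class monoid_mult (M = UNIV).
  A right M-set is given by a carrier X and an action act :: 'x => 'a => 'x.\<close>

definition idempotent :: "'a::monoid_mult \<Rightarrow> bool" where
  "idempotent e \<longleftrightarrow> e * e = e"

definition right_ideal :: "'a::monoid_mult set \<Rightarrow> bool" where
  "right_ideal I \<longleftrightarrow> (\<forall>x\<in>I. \<forall>y. x * y \<in> I)"

definition two_sided_ideal :: "'a::monoid_mult set \<Rightarrow> bool" where
  "two_sided_ideal I \<longleftrightarrow> (\<forall>x\<in>I. \<forall>y. x * y \<in> I \<and> y * x \<in> I)"

definition ideal_sq :: "'a::monoid_mult set \<Rightarrow> 'a set" where
  "ideal_sq I = {x * y | x y. x \<in> I \<and> y \<in> I}"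

definition topology_F :: "'a::monoid_mult set \<Rightarrow> 'a set set" where
  "topology_F I = {A. right_ideal A \<and> I \<subseteq> A}"

definition hom_M :: "'a::monoid_mult set \<Rightarrow> 'x set \<Rightarrow> ('x \<Rightarrow> 'a \<Rightarrow> 'x) \<Rightarrow> ('a \<Rightarrow> 'x) set" where
  "hom_M A X act = {f \<in> A \<rightarrow>\<^sub>E X. \<forall>y\<in>A. \<forall>n. f (y * n) = act (f y) n}"

definition is_sheaf :: "'a::monoid_mult set set \<Rightarrow> 'x set \<Rightarrow> ('x \<Rightarrow> 'a \<Rightarrow> 'x) \<Rightarrow> bool" where
  "is_sheaf F X act \<longleftrightarrow> (\<forall>A\<in>F. bij_betw (\<lambda>x. restrict (\<lambda>y. act x y) A) X (hom_M A X act))"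

definition left_principal :: "'a::monoid_mult \<Rightarrow> 'a set" where
  "left_principal e = {m * e | m. True}"

text \<open>Direct image p_*(S) = Hom_Sets(Me, S) (extensional functions), with right action (alpha m)(a) = alpha(m a).\<close>
definition pstar_carrier :: "'a::monoid_mult \<Rightarrow> 's set \<Rightarrow> ('a \<Rightarrow> 's) set" where
  "pstar_carrier e S = left_principal e \<rightarrow>\<^sub>E S"

definition pstar_act :: "'a::monoid_mult \<Rightarrow> ('a \<Rightarrow> 's) \<Rightarrow> 'a \<Rightarrow> ('a \<Rightarrow> 's)" where
  "pstar_act e \<alpha> n = restrict (\<lambda>a. \<alpha> (n * a)) (left_principal e)"

end

theory Submission
  imports Defs
begin

lemma lp_mem: "x \<in> left_principal e \<longleftrightarrow> (\<exists>k. x = k * e)"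
  by (auto simp: left_principal_def)

lemma lp_idem: "idempotent e \<Longrightarrow> x \<in> left_principal e \<Longrightarrow> x * e = x"
  by (auto simp: left_principal_def idempotent_def mult.assoc)

lemma lp_mult: "x \<in> left_principal e \<Longrightarrow> n * x \<in> left_principal e"
  by (auto simp: left_principal_def mult.assoc[symmetric])

lemma lp_e: "idempotent e \<Longrightarrow> e \<in> left_principal e"
  by (auto simp: left_principal_def idempotent_def intro: exI[of _ e])

theorem lemma4p5:
  fixes e :: "'a::monoid_mult" and m :: "'a set"
  assumes "idempotent e"
    and "two_sided_ideal m"
    and "m = ideal_sq m"
    and "\<exists>a b :: 's. a \<noteq> b"
  shows "(\<forall>S :: 's set. is_sheaf (topology_F m) (pstar_carrier e S) (pstar_act e)) \<longleftrightarrow> e \<in> m"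
proof
  assume H: "\<forall>S :: 's set. is_sheaf (topology_F m) (pstar_carrier e S) (pstar_act e)"
  show "e \<in> m"
  proof (rule ccontr)
    assume ne: "e \<notin> m"
    obtain a b :: 's where ab: "a \<noteq> b" using assms(4) by blast
    have mF: "m \<in> topology_F m"
      using assms(2) by (auto simp: topology_F_def right_ideal_def two_sided_ideal_def)
    have bij: "bij_betw (\<lambda>x. restrict (\<lambda>y. pstar_act e x y) m) (pstar_carrier e (UNIV::'s set)) (hom_M m (pstar_carrier e UNIV) (pstar_act e))"
      using H mF by (auto simp: is_sheaf_def)
    define \<alpha> where "\<alpha> = restrict (\<lambda>_. a) (left_principal e)"
    define \<beta> where "\<beta> = \<alpha>(e := b)"
    have e1: "e \<in> left_principal e" using lp_e assms(1) .
    have A: "\<alpha> \<in> pstar_carrier e UNIV" by (auto simp: \<alpha>_def pstar_carrier_def)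
    have B: "\<beta> \<in> pstar_carrier e UNIV" using e1 by (auto simp: \<beta>_def \<alpha>_def pstar_carrier_def)
    have neq: "\<alpha> \<noteq> \<beta>"
      using e1 ab by (auto simp: \<beta>_def \<alpha>_def dest: fun_cong[of _ _ e])
    have "restrict (\<lambda>y. pstar_act e \<alpha> y) m = restrict (\<lambda>y. pstar_act e \<beta> y) m"
    proof (rule ext)
      fix y
      show "restrict (\<lambda>y. pstar_act e \<alpha> y) m y = restrict (\<lambda>y. pstar_act e \<beta> y) m y"
      proof (cases "y \<in> m")
        case True
        have "\<And>x. y * x \<noteq> e" using True ne assms(2) by (auto simp: two_sided_ideal_def)
        then show ?thesis using True
          by (auto simp: pstar_act_def \<beta>_def intro!: ext)
      qed simp
    qed
    then show False using bij A B neq by (auto simp: bij_betw_def inj_on_def)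
  qed
next
  assume em: "e \<in> m"
  have Me: "\<And>x. x \<in> left_principal e \<Longrightarrow> x \<in> m"
    using em assms(2) by (auto simp: lp_mem two_sided_ideal_def)
  show "\<forall>S :: 's set. is_sheaf (topology_F m) (pstar_carrier e S) (pstar_act e)"
  proof (intro allI)
    fix S :: "'s set"
    show "is_sheaf (topology_F m) (pstar_carrier e S) (pstar_act e)"
      unfolding is_sheaf_def
    proof
      fix A assume AF: "A \<in> topology_F m"
      then have RA: "right_ideal A" and mA: "m \<subseteq> A" by (auto simp: topology_F_def)
      let ?F = "\<lambda>x. restrict (\<lambda>y. pstar_act e x y) A"
      have inj: "inj_on ?F (pstar_carrier e S)"
      proof (rule inj_onI)
        fix \<alpha> \<beta> assume a: "\<alpha> \<in> pstar_carrier e S" and b: "\<beta> \<in> pstar_carrier e S"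
          and eq: "?F \<alpha> = ?F \<beta>"
        show "\<alpha> = \<beta>"
        proof (rule ext)
          fix x
          show "\<alpha> x = \<beta> x"
          proof (cases "x \<in> left_principal e")
            case True
            then have xA: "x \<in> A" using Me mA by auto
            have "?F \<alpha> x e = ?F \<beta> x e" using eq by simp
            then show ?thesis using xA True lp_e[OF assms(1)] lp_idem[OF assms(1) True]
              by (simp add: pstar_act_def)
          next
            case False
            then show ?thesis using a b by (auto simp: pstar_carrier_def PiE_def extensional_def)
          qed
        qed
      qed
      have img1: "?F ` pstar_carrier e S \<subseteq> hom_M A (pstar_carrier e S) (pstar_act e)"
      proof
        fix f assume "f \<in> ?F ` pstar_carrier e S"
        then obtain \<alpha> where a: "\<alpha> \<in> pstar_carrier e S" and f: "f = ?F \<alpha>" by blast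
        have "\<And>y. pstar_act e \<alpha> y \<in> pstar_carrier e S"
          using a lp_mult by (auto simp: pstar_act_def pstar_carrier_def)
        moreover have "\<And>y n. pstar_act e \<alpha> (y * n) = pstar_act e (pstar_act e \<alpha> y) n"
          by (auto simp: pstar_act_def mult.assoc lp_mult intro!: ext)
        ultimately show "f \<in> hom_M A (pstar_carrier e S) (pstar_act e)"
          using RA by (auto simp: f hom_M_def right_ideal_def)
      qed
      have img2: "hom_M A (pstar_carrier e S) (pstar_act e) \<subseteq> ?F ` pstar_carrier e S"
      proof
        fix f assume f: "f \<in> hom_M A (pstar_carrier e S) (pstar_act e)"
        then have fX: "\<And>y. y \<in> A \<Longrightarrow> f y \<in> pstar_carrier e S"
          and fE: "f \<in> extensional A"
          and fh: "\<And>y n. y \<in> A \<Longrightarrow> f (y * n) = pstar_act e (f y) n"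
          by (auto simp: hom_M_def PiE_def)
        define \<alpha> where "\<alpha> = restrict (\<lambda>x. f x e) (left_principal e)"
        have e1: "e \<in> left_principal e" using lp_e assms(1) .
        have aX: "\<alpha> \<in> pstar_carrier e S"
        proof -
          have "\<And>x. x \<in> left_principal e \<Longrightarrow> f x e \<in> S"
            using fX Me mA e1 by (auto simp: pstar_carrier_def)
          then show ?thesis by (auto simp: \<alpha>_def pstar_carrier_def)
        qed
        have "?F \<alpha> = f"
        proof (rule ext)
          fix y
          show "?F \<alpha> y = f y"
          proof (cases "y \<in> A")
            case False then show ?thesis using fE by (auto simp: extensional_def)
          next
            case True
            show ?thesis
            proof (rule ext)
              fix b
              show "?F \<alpha> y b = f y b"
              proof (cases "b \<in> left_principal e")
                case bT: True
                have yb: "y * b \<in> left_principal e" using lp_mult bT by blast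
                have "f (y * b) e = pstar_act e (f y) b e" using fh True by simp
                also have "\<dots> = f y (b * e)" using e1 by (simp add: pstar_act_def)
                also have "\<dots> = f y b" using lp_idem[OF assms(1) bT] by simp
                finally show ?thesis using True bT yb by (simp add: pstar_act_def \<alpha>_def)
              next
                case bF: False
                have "f y \<in> extensional (left_principal e)"
                  using fX True by (auto simp: pstar_carrier_def PiE_def)
                then show ?thesis using True bF by (auto simp: pstar_act_def extensional_def)
              qed
            qed
          qed
        qed
        then show "f \<in> ?F ` pstar_carrier e S" using aX by blast
      qed
      show "bij_betw ?F (pstar_carrier e S) (hom_M A (pstar_carrier e S) (pstar_act e))"
        using inj img1 img2 by (auto simp: bij_betw_def)
    qed
  qed
qed

end
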